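(* In the setting described in the context, fix $\eta=\delta+iy$ with $\delta\in(0,s_0)$ and let $F(\cdot,\cdot,\eta)$ be a classical solution on $[0,T]\times\Lambda$ of $$\partial_tF+\mu(\lambda)\partial_\lambda F+\lambda\int_0^\infty\big(e^{\eta x}F(t,\lambda+\beta x,\eta)-F(t,\lambda,\eta)\big)\tilde\nu(\lambda,dx)-rF=0,\qquad F(T,\lambda,\eta)\equiv1,$$ (values of $F$ at arguments outside $\Lambda$ being given by clamped extension). Let $(F^n)_{n=0}^N$ be produced by the IMEX scheme $AF^n=F^{n+1}+\Delta t\,N^\Delta_{\exp}[F^{n+1}]$, $n=N-1,\dots,0$, with $F^N_i=1$ for all $i$. Assume the explicit CFL condition $\Delta t\,L_{\exp}(\delta)\le c<1$. Define the local truncation residual by $$\tau^n_i:=\frac{F(t_{n+1},\lambda_i)-F(t_n,\lambda_i)}{\Delta t}-\frac{\big(A\,F(t_n,\cdot)\big)_i-F(t_n,\lambda_i)}{\Delta t}+\big(N^\Delta_{\exp}[F(t_{n+1},\cdot)]\big)_i,$$ and assume $\max_{0\le n\le N-1}\|\tau^n\|_{\infty,\Lambda}\le\bar\tau$. Then there exists $C_T<\infty$ depending only on $T$, $r$ and $L_{\exp}(\delta)$ such that for all $n=0,\dots,N$, $$\|F^n-F(t_n,\cdot,\eta)\|_{\infty,\Lambda}\le C_T\,\bar\tau.$$ In particular the scheme converges whenever $\bar\tau\to0$.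
   Context: Fix $T>0$, $r\ge0$, $\beta\ge0$, a drift $\mu:\mathbb R_+\to\mathbb R$, a compact interval $\Lambda=[\lambda_{\min},\lambda_{\max}]\subset[0,\infty)$ and a probability kernel $\tilde\nu(\lambda,dx)$ on $(0,\infty)$, with $s_0>0$ such that $\sup_{\lambda\in\Lambda}\int_0^\infty e^{sx}\tilde\nu(\lambda,dx)<\infty$ for all $s\in[0,s_0)$. Grid: $\lambda_i=\lambda_{\min}+ih$, $i=0,\dots,I$, $\lambda_I=\lambda_{\max}$; $\Delta t=T/N$, $t_n=n\Delta t$. $\mu_i=\mu(\lambda_i)$, $\mu_i^\pm$ its positive/negative parts ($\mu_i^-=\min(\mu_i,0)$). $A$ is the tridiagonal matrix $A=I-\Delta t L^\Delta_{\rm imp}$ with $A_{i,i}=1+\Delta t\big(\frac{\mu_i^+-\mu_i^-}{h}+r\big)$, $A_{i,i-1}=\Delta t\mu_i^-/h$ ($i\ge1$), $A_{i,i+1}=-\Delta t\mu_i^+/h$ ($i\le I-1$), so that $-(AV-V)/\Delta t$ is the upwind discretisation of $\mu\partial_\lambda V-rV$. For a grid vector $V$, $\Pi_{\Delta\lambda}[V]$ is the PCHIP (Fritsch–Carlson) interpolant on $\Lambda$ extended to $[0,\infty)$ by clamping; $(N^\Delta_{\exp}[V])_i=\lambda_i\big(\int_0^\infty e^{\eta x}\Pi_{\Delta\lambda}[V](\lambda_i+\beta x)\tilde\nu(\lambda_i,dx)-V_i\big)$. $\|V\|_{\infty,\Lambda}=\max_i|V_i|$; $L_{\exp}(\delta)=\sup_i\lambda_i\big(\int_0^\infty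 e^{\delta x}\tilde\nu(\lambda_i,dx)+1\big)$. *)

theory Defs
  imports "HOL-Probability.Probability"
begin

definition grid_h :: "real \<Rightarrow> real \<Rightarrow> nat \<Rightarrow> real" where
  "grid_h lmin lmax I = (lmax - lmin) / real I"

definition grid_pt :: "real \<Rightarrow> real \<Rightarrow> nat \<Rightarrow> nat \<Rightarrow> real" where
  "grid_pt lmin lmax I i = lmin + real i * grid_h lmin lmax I"

definition time_pt :: "real \<Rightarrow> nat \<Rightarrow> nat \<Rightarrow> real" where
  "time_pt T N n = real n * (T / real N)"

definition norm_grid :: "nat \<Rightarrow> (nat \<Rightarrow> complex) \<Rightarrow> real" where
  "norm_grid I V = Max ((\<lambda>i. cmod (V i)) ` {0..I})"

definition pchip_secant :: "real \<Rightarrow> real \<Rightarrow> nat \<Rightarrow> (nat \<Rightarrow> real) \<Rightarrow> nat \<Rightarrow> real" where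
  "pchip_secant lmin lmax I y k = (y (Suc k) - y k) / grid_h lmin lmax I"

text \<open>Shape-preserving one-sided three-point end slope (d computed from
  the adjacent secant m0 and the next one m1).\<close>
definition pchip_end_slope :: "real \<Rightarrow> real \<Rightarrow> real" where
  "pchip_end_slope m0 m1 =
     (let d = (3 * m0 - m1) / 2 in
      if sgn d \<noteq> sgn m0 then 0
      else if sgn m0 \<noteq> sgn m1 \<and> \<bar>d\<bar> > 3 * \<bar>m0\<bar> then 3 * m0
      else d)"

definition pchip_slope :: "real \<Rightarrow> real \<Rightarrow> nat \<Rightarrow> (nat \<Rightarrow> real) \<Rightarrow> nat \<Rightarrow> real" where
  "pchip_slope lmin lmax I y k =
     (let m = pchip_secant lmin lmax I y in
      if I = 1 then m 0
      else if k = 0 then pchip_end_slope (m 0) (m 1)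
      else if k = I then pchip_end_slope (m (I - 1)) (m (I - 2))
      else if m (k - 1) * m k > 0 then 2 * m (k - 1) * m k / (m (k - 1) + m k)
      else 0)"

definition pchip_real :: "real \<Rightarrow> real \<Rightarrow> nat \<Rightarrow> (nat \<Rightarrow> real) \<Rightarrow> real \<Rightarrow> real" where
  "pchip_real lmin lmax I y x =
     (let h = grid_h lmin lmax I;
          x' = max lmin (min lmax x);
          k = min (nat \<lfloor>(x' - lmin) / h\<rfloor>) (I - 1);
          s = (x' - grid_pt lmin lmax I k) / h;
          d = pchip_slope lmin lmax I y
      in y k * (2 * s^3 - 3 * s^2 + 1) + h * d k * (s^3 - 2 * s^2 + s)
         + y (Suc k) * (- 2 * s^3 + 3 * s^2) + h * d (Suc k) * (s^3 - s^2))"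

definition pchip :: "real \<Rightarrow> real \<Rightarrow> nat \<Rightarrow> (nat \<Rightarrow> complex) \<Rightarrow> real \<Rightarrow> complex" where
  "pchip lmin lmax I V x =
     Complex (pchip_real lmin lmax I (\<lambda>i. Re (V i)) x) (pchip_real lmin lmax I (\<lambda>i. Im (V i)) x)"

definition Amat :: "real \<Rightarrow> real \<Rightarrow> nat \<Rightarrow> real \<Rightarrow> (real \<Rightarrow> real) \<Rightarrow> real \<Rightarrow> nat \<Rightarrow> nat \<Rightarrow> real" where
  "Amat lmin lmax I dt mu r i j =
     (let h = grid_h lmin lmax I;
          mp = max (mu (grid_pt lmin lmax I i)) 0;
          mm = min (mu (grid_pt lmin lmax I i)) 0
      in if j = i then 1 + dt * ((mp - mm) / h + r)
         else if 1 \<le> i \<and> j = i - 1 then dt * mm / h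
         else if i + 1 \<le> I \<and> j = i + 1 then - dt * mp / h
         else 0)"

definition Amul :: "real \<Rightarrow> real \<Rightarrow> nat \<Rightarrow> real \<Rightarrow> (real \<Rightarrow> real) \<Rightarrow> real \<Rightarrow> (nat \<Rightarrow> complex) \<Rightarrow> nat \<Rightarrow> complex" where
  "Amul lmin lmax I dt mu r V i = (\<Sum>j = 0..I. complex_of_real (Amat lmin lmax I dt mu r i j) * V j)"

definition Nexp :: "real \<Rightarrow> real \<Rightarrow> nat \<Rightarrow> real \<Rightarrow> (real \<Rightarrow> real measure) \<Rightarrow> complex
                    \<Rightarrow> (nat \<Rightarrow> complex) \<Rightarrow> nat \<Rightarrow> complex" where
  "Nexp lmin lmax I beta nu eta V i =
     (let l = grid_pt lmin lmax I i in
      complex_of_real l *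
        ((LINT x|nu l. exp (eta * complex_of_real x) * pchip lmin lmax I V (l + beta * x)) - V i))"

definition Lexp :: "real \<Rightarrow> real \<Rightarrow> nat \<Rightarrow> (real \<Rightarrow> real measure) \<Rightarrow> real \<Rightarrow> real" where
  "Lexp lmin lmax I nu d =
     Max ((\<lambda>i. grid_pt lmin lmax I i *
                 ((LINT x|nu (grid_pt lmin lmax I i). exp (d * x)) + 1)) ` {0..I})"

definition prob_kernel_on :: "real set \<Rightarrow> (real \<Rightarrow> real measure) \<Rightarrow> bool" where
  "prob_kernel_on L nu \<longleftrightarrow>
     (\<forall>l\<in>L. prob_space (nu l) \<and> sets (nu l) = sets borel \<and> emeasure (nu l) {..0} = 0) \<and>
     (\<forall>A\<in>sets borel. (\<lambda>l. emeasure (nu l) A) \<in> borel_measurable (restrict_space borel L))"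

definition exp_moments :: "real set \<Rightarrow> (real \<Rightarrow> real measure) \<Rightarrow> real \<Rightarrow> bool" where
  "exp_moments L nu s0 \<longleftrightarrow>
     (\<forall>s. 0 \<le> s \<and> s < s0 \<longrightarrow> (SUP l\<in>L. \<integral>\<^sup>+ x. ennreal (exp (s * x)) \<partial>nu l) < \<infinity>)"

definition clamp_ext :: "real \<Rightarrow> real \<Rightarrow> (real \<Rightarrow> complex) \<Rightarrow> real \<Rightarrow> complex" where
  "clamp_ext lmin lmax G x = G (max lmin (min lmax x))"

definition classical_solution ::
  "real \<Rightarrow> real \<Rightarrow> real \<Rightarrow> real \<Rightarrow> real \<Rightarrow> (real \<Rightarrow> real) \<Rightarrow> (real \<Rightarrow> real measure) \<Rightarrow> complex
   \<Rightarrow> (real \<Rightarrow> real \<Rightarrow> complex) \<Rightarrow> bool" where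
  "classical_solution T r beta lmin lmax mu nu eta F \<longleftrightarrow>
     continuous_on ({0..T} \<times> {lmin..lmax}) (\<lambda>(t, l). F t l) \<and>
     (\<forall>t\<in>{0..T}. \<forall>l\<in>{lmin..lmax}. \<exists>Ft Fl.
        ((\<lambda>s. F s l) has_vector_derivative Ft) (at t within {0..T}) \<and>
        ((\<lambda>m. F t m) has_vector_derivative Fl) (at l within {lmin..lmax}) \<and>
        continuous_on ({0..T} \<times> {lmin..lmax}) (\<lambda>(s, m). vector_derivative (\<lambda>s'. F s' m) (at s within {0..T})) \<and>
        continuous_on ({0..T} \<times> {lmin..lmax}) (\<lambda>(s, m). vector_derivative (\<lambda>m'. F s m') (at m within {lmin..lmax})) \<and>
        integrable (nu l) (\<lambda>x. exp (eta * complex_of_real x) * clamp_ext lmin lmax (F t) (l + beta * x)) \<and>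
        Ft + complex_of_real (mu l) * Fl
          + complex_of_real l * ((LINT x|nu l. exp (eta * complex_of_real x) * clamp_ext lmin lmax (F t) (l + beta * x)) - F t l)
          - complex_of_real r * F t l = 0) \<and>
     (\<forall>l\<in>{lmin..lmax}. F T l = 1)"

definition imex_scheme ::
  "real \<Rightarrow> nat \<Rightarrow> real \<Rightarrow> real \<Rightarrow> real \<Rightarrow> real \<Rightarrow> nat \<Rightarrow> (real \<Rightarrow> real) \<Rightarrow> (real \<Rightarrow> real measure) \<Rightarrow> complex
   \<Rightarrow> (nat \<Rightarrow> nat \<Rightarrow> complex) \<Rightarrow> bool" where
  "imex_scheme T N r beta lmin lmax I mu nu eta Fn \<longleftrightarrow>
     (\<forall>i\<le>I. Fn N i = 1) \<and>
     (\<forall>n<N. \<forall>i\<le>I. Amul lmin lmax I (T / real N) mu r (Fn n) i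
                    = Fn (Suc n) i + complex_of_real (T / real N) * Nexp lmin lmax I beta nu eta (Fn (Suc n)) i)"

definition residual ::
  "real \<Rightarrow> nat \<Rightarrow> real \<Rightarrow> real \<Rightarrow> real \<Rightarrow> real \<Rightarrow> nat \<Rightarrow> (real \<Rightarrow> real) \<Rightarrow> (real \<Rightarrow> real measure) \<Rightarrow> complex
   \<Rightarrow> (real \<Rightarrow> real \<Rightarrow> complex) \<Rightarrow> nat \<Rightarrow> nat \<Rightarrow> complex" where
  "residual T N r beta lmin lmax I mu nu eta F n i =
     (let dt = T / real N;
          Gn = (\<lambda>j. F (time_pt T N n) (grid_pt lmin lmax I j));
          Gn1 = (\<lambda>j. F (time_pt T N (Suc n)) (grid_pt lmin lmax I j))
      in (Gn1 i - Gn i) / complex_of_real dt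
         - (Amul lmin lmax I dt mu r Gn i - Gn i) / complex_of_real dt
         + Nexp lmin lmax I beta nu eta Gn1 i)"

end

theory Submission
  imports Defs
begin


definition hmean :: "real \<Rightarrow> real \<Rightarrow> real" where
  "hmean a b = (if a * b > 0 then 2 * a * b / (a + b) else 0)"

lemma hmean_pos_step:
  fixes a a' b :: real
  assumes "a > 0" "a' > 0" "b > 0"
  shows "\<bar>2*a*b/(a+b) - 2*a'*b/(a'+b)\<bar> \<le> 2 * \<bar>a - a'\<bar>"
proof -
  have "2*a*b/(a+b) - 2*a'*b/(a'+b) = 2*b^2*(a-a')/((a+b)*(a'+b))"
    using assms by (simp add: field_simps power2_eq_square)
  also have "\<bar>\<dots>\<bar> = 2*\<bar>a-a'\<bar> * (b^2/((a+b)*(a'+b)))"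
    using assms by (simp add: abs_mult abs_divide)
  also have "\<dots> \<le> 2*\<bar>a-a'\<bar> * 1"
  proof (rule mult_left_mono)
    show "b^2/((a+b)*(a'+b)) \<le> 1" using assms
      by (simp add: divide_le_eq_1 power2_eq_square mult_mono)
  qed simp
  finally show ?thesis by simp
qed

lemma hmean_pos_lip:
  fixes a a' b b' e :: real
  assumes "a > 0" "a' > 0" "b > 0" "b' > 0" "\<bar>a-a'\<bar> \<le> e" "\<bar>b-b'\<bar> \<le> e"
  shows "\<bar>2*a*b/(a+b) - 2*a'*b'/(a'+b')\<bar> \<le> 4 * e"
proof -
  have 1: "\<bar>2*a*b/(a+b) - 2*a'*b/(a'+b)\<bar> \<le> 2*e"
    by (rule order_trans[OF hmean_pos_step[OF assms(1,2,3)]]) (use assms(5) in simp)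
  have 2: "\<bar>2*a'*b/(a'+b) - 2*a'*b'/(a'+b')\<bar> \<le> 2*e"
    using hmean_pos_step[OF assms(3,4,2)] assms(6) by (simp add: algebra_simps)
  show ?thesis using 1 2 by linarith
qed

lemma hmean_bound:
  fixes a b :: real
  shows "\<bar>hmean a b\<bar> \<le> 2 * min \<bar>a\<bar> \<bar>b\<bar>"
proof (cases "a * b > 0")
  case True
  then have s: "(a > 0 \<and> b > 0) \<or> (a < 0 \<and> b < 0)" by (metis mult_pos_neg mult_neg_pos not_less_iff_gr_or_eq mult_eq_0_iff)
  then have "\<bar>2*a*b/(a+b)\<bar> \<le> 2 * min \<bar>a\<bar> \<bar>b\<bar>"
  proof
    assume h: "a > 0 \<and> b > 0"
    then show ?thesis by (auto simp: abs_divide abs_mult divide_le_eq min_def field_simps mult_mono)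
  next
    assume h: "a < 0 \<and> b < 0"
    then show ?thesis by (auto simp: abs_divide abs_mult divide_le_eq min_def field_simps mult_mono)
  qed
  then show ?thesis using True by (simp add: hmean_def)
qed (simp add: hmean_def)

lemma hmean_neg: "hmean (-a) (-b) = - hmean a b"
  by (simp add: hmean_def field_simps) (simp add: add.commute minus_divide_right)

lemma hmean_aux:
  fixes a a' b b' e :: real
  assumes "\<not> a * b > 0" "\<bar>a-a'\<bar> \<le> e" "\<bar>b-b'\<bar> \<le> e"
  shows "\<bar>hmean a' b'\<bar> \<le> 2 * e"
proof (cases "a' * b' > 0")
  case False
  then show ?thesis using assms by (simp add: hmean_def)
next
  case True
  then have s: "(a' > 0 \<and> b' > 0) \<or> (a' < 0 \<and> b' < 0)"
    by (metis mult_pos_neg mult_neg_pos not_less_iff_gr_or_eq mult_eq_0_iff)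
  have ab: "a \<le> 0 \<or> b \<le> 0" "a \<ge> 0 \<or> b \<ge> 0" using assms(1)
    by (metis mult_pos_pos not_le, metis mult_neg_neg not_le)
  have "min \<bar>a'\<bar> \<bar>b'\<bar> \<le> e" using s ab assms(2,3) by (auto simp: min_def abs_if split: if_splits)
  then show ?thesis using hmean_bound[of a' b'] by linarith
qed

lemma hmean_lip:
  fixes a a' b b' e :: real
  assumes "\<bar>a-a'\<bar> \<le> e" "\<bar>b-b'\<bar> \<le> e"
  shows "\<bar>hmean a b - hmean a' b'\<bar> \<le> 4 * e"
proof -
  have pp: "\<bar>hmean a b - hmean a' b'\<bar> \<le> 4 * e" if "a > 0" "a' > 0" "b > 0" "b' > 0"
      "\<bar>a-a'\<bar> \<le> e" "\<bar>b-b'\<bar> \<le> e" for a a' b b' :: real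
    using hmean_pos_lip[OF that] that by (simp add: hmean_def)
  consider "a*b > 0 \<and> a'*b' > 0" | "\<not> a*b > 0" | "\<not> a'*b' > 0" by blast
  then show ?thesis
  proof cases
    case 1
    then have s: "(a > 0 \<and> b > 0) \<or> (a < 0 \<and> b < 0)" "(a' > 0 \<and> b' > 0) \<or> (a' < 0 \<and> b' < 0)"
      by (metis mult_pos_neg mult_neg_pos not_less_iff_gr_or_eq mult_eq_0_iff)+
    have b1: "\<bar>hmean a b\<bar> \<le> 2 * min \<bar>a\<bar> \<bar>b\<bar>" "\<bar>hmean a' b'\<bar> \<le> 2 * min \<bar>a'\<bar> \<bar>b'\<bar>"
      by (rule hmean_bound)+
    from s show ?thesis
    proof (elim disjE)
      assume "a > 0 \<and> b > 0" "a' > 0 \<and> b' > 0" then show ?thesis using pp assms by blast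
    next
      assume "a < 0 \<and> b < 0" "a' < 0 \<and> b' < 0"
      then have "\<bar>hmean (-a) (-b) - hmean (-a') (-b')\<bar> \<le> 4 * e" using pp[of "-a" "-a'" "-b" "-b'"] assms by auto
      then show ?thesis by (simp add: hmean_neg)
    next
      assume "a > 0 \<and> b > 0" "a' < 0 \<and> b' < 0" then show ?thesis using b1 assms by (auto simp: min_def split: if_splits)
    next
      assume "a < 0 \<and> b < 0" "a' > 0 \<and> b' > 0" then show ?thesis using b1 assms by (auto simp: min_def split: if_splits)
    qed
  next
    case 2
    then have "hmean a b = 0" by (simp add: hmean_def)
    then show ?thesis using hmean_aux[OF 2 assms] by simp
  next
    case 3
    then have "hmean a' b' = 0" by (simp add: hmean_def)
    moreover have e1: "\<bar>a'-a\<bar> \<le> e" "\<bar>b'-b\<bar> \<le> e" using assms by linarith+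
    moreover have "e \<ge> 0" using assms(1) by linarith
    ultimately show ?thesis using hmean_aux[OF 3 e1] by simp
  qed
qed



lemma max_lip: "\<bar>x-x'\<bar> \<le> e \<Longrightarrow> \<bar>y-y'\<bar> \<le> e \<Longrightarrow> \<bar>max x y - max x' y'\<bar> \<le> (e::real)"
  by (auto simp: max_def abs_le_iff)
lemma min_lip: "\<bar>x-x'\<bar> \<le> e \<Longrightarrow> \<bar>y-y'\<bar> \<le> e \<Longrightarrow> \<bar>min x y - min x' y'\<bar> \<le> (e::real)"
  by (auto simp: min_def abs_le_iff)

lemma end_median:
  "pchip_end_slope a b = max (min 0 (3*a)) (min (max 0 (3*a)) ((3*a-b)/2))"
proof -
  define d where "d = (3*a-b)/2"
  have e: "pchip_end_slope a b = (if sgn d \<noteq> sgn a then 0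
      else if sgn a \<noteq> sgn b \<and> \<bar>d\<bar> > 3 * \<bar>a\<bar> then 3 * a else d)"
    unfolding pchip_end_slope_def Let_def d_def by simp
  have "(if sgn d \<noteq> sgn a then 0
      else if sgn a \<noteq> sgn b \<and> \<bar>d\<bar> > 3 * \<bar>a\<bar> then 3 * a else d) = max (min 0 (3*a)) (min (max 0 (3*a)) d)"
  proof (cases a "0::real" rule: linorder_cases)
    case less
    then show ?thesis by (cases "b < 0"; cases "d < 0") (auto simp: sgn_real_def d_def)
  next
    case equal
    then show ?thesis by (auto simp: sgn_real_def d_def)
  next
    case greater
    then show ?thesis by (cases "b > 0"; cases "d > 0") (auto simp: sgn_real_def d_def)
  qed
  then show ?thesis using e d_def by simp
qed

lemma end_lip:
  fixes a a' b b' e :: real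
  assumes "\<bar>a-a'\<bar> \<le> e" "\<bar>b-b'\<bar> \<le> e"
  shows "\<bar>pchip_end_slope a b - pchip_end_slope a' b'\<bar> \<le> 4 * e"
proof -
  have e0: "e \<ge> 0" using assms by linarith
  have u: "\<bar>3*a - 3*a'\<bar> \<le> 4*e" using assms e0 by linarith
  have z: "\<bar>(0::real) - 0\<bar> \<le> 4*e" using e0 by simp
  have n: "\<bar>(3*a-b) - (3*a'-b')\<bar> \<le> 4*e" using assms e0 by (auto simp: abs_le_iff)
  have eqn: "(3*a-b)/2 - (3*a'-b')/2 = ((3*a-b) - (3*a'-b'))/2" by (simp add: diff_divide_distrib)
  have d: "\<bar>(3*a-b)/2 - (3*a'-b')/2\<bar> \<le> 4*e"
  proof -
    have "\<bar>(3*a-b)/2 - (3*a'-b')/2\<bar> = \<bar>(3*a-b) - (3*a'-b')\<bar>/2" unfolding eqn by simp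
    moreover have "\<bar>(3*a-b) - (3*a'-b')\<bar>/2 \<le> \<bar>(3*a-b) - (3*a'-b')\<bar>" by simp
    ultimately show ?thesis using n by linarith
  qed
  show ?thesis unfolding end_median
    by (intro max_lip min_lip z u d)
qed


lemma secant_lip:
  assumes h: "grid_h lmin lmax I > 0" and B: "\<forall>i\<le>I. \<bar>y i - z i\<bar> \<le> B" and j: "Suc j \<le> I"
  shows "\<bar>pchip_secant lmin lmax I y j - pchip_secant lmin lmax I z j\<bar> \<le> 2 * B / grid_h lmin lmax I"
proof -
  let ?h = "grid_h lmin lmax I"
  have "pchip_secant lmin lmax I y j - pchip_secant lmin lmax I z j
      = ((y (Suc j) - z (Suc j)) - (y j - z j)) / ?h"
    unfolding pchip_secant_def by (simp add: diff_divide_distrib)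
  also have "\<bar>\<dots>\<bar> = \<bar>(y (Suc j) - z (Suc j)) - (y j - z j)\<bar> / ?h" using h by (simp add: abs_divide)
  also have "\<dots> \<le> 2 * B / ?h"
  proof (rule divide_right_mono)
    have "\<bar>y (Suc j) - z (Suc j)\<bar> \<le> B" "\<bar>y j - z j\<bar> \<le> B" using B j by auto
    then show "\<bar>(y (Suc j) - z (Suc j)) - (y j - z j)\<bar> \<le> 2 * B" by linarith
  qed (use h in simp)
  finally show ?thesis .
qed

lemma slope_alt:
  "pchip_slope lmin lmax I y k =
     (let m = pchip_secant lmin lmax I y in
      if I = 1 then m 0
      else if k = 0 then pchip_end_slope (m 0) (m 1)
      else if k = I then pchip_end_slope (m (I - 1)) (m (I - 2))
      else hmean (m (k - 1)) (m k))"
  unfolding pchip_slope_def hmean_def Let_def by simp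

lemma slope_lip:
  assumes h: "grid_h lmin lmax I > 0" and I: "I \<ge> 1" and k: "k \<le> I"
    and B: "\<forall>i\<le>I. \<bar>y i - z i\<bar> \<le> B"
  shows "\<bar>pchip_slope lmin lmax I y k - pchip_slope lmin lmax I z k\<bar> \<le> 8 * B / grid_h lmin lmax I"
proof -
  let ?h = "grid_h lmin lmax I"
  let ?my = "pchip_secant lmin lmax I y" and ?mz = "pchip_secant lmin lmax I z"
  have B0: "B \<ge> 0" using B by (metis abs_ge_zero order_trans zero_le)
  have S: "\<bar>?my j - ?mz j\<bar> \<le> 2 * B / ?h" if "Suc j \<le> I" for j
    using secant_lip[OF h B that] .
  have e0: "2 * B / ?h \<le> 8 * B / ?h" using h B0 by (simp add: divide_right_mono)
  have e4: "4 * (2 * B / ?h) = 8 * B / ?h" by simp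
  show ?thesis
  proof (cases "I = 1")
    case True then show ?thesis using S[of 0] e0 I by (simp add: slope_alt Let_def)
  next
    case I1: False
    then have I2: "I \<ge> 2" using I by simp
    show ?thesis
    proof (cases "k = 0")
      case True
      have "\<bar>pchip_end_slope (?my 0) (?my 1) - pchip_end_slope (?mz 0) (?mz 1)\<bar> \<le> 4 * (2 * B / ?h)"
        by (rule end_lip) (use S I2 in auto)
      then show ?thesis using True I1 by (simp add: slope_alt Let_def)
    next
      case k0: False
      show ?thesis
      proof (cases "k = I")
        case True
        have "\<bar>pchip_end_slope (?my (I-1)) (?my (I-2)) - pchip_end_slope (?mz (I-1)) (?mz (I-2))\<bar> \<le> 4 * (2 * B / ?h)"
          by (rule end_lip) (use S I2 in auto)
        then show ?thesis using True I1 k0 by (simp add: slope_alt Let_def)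
      next
        case False
        have "\<bar>hmean (?my (k-1)) (?my k) - hmean (?mz (k-1)) (?mz k)\<bar> \<le> 4 * (2 * B / ?h)"
          by (rule hmean_lip) (use S k k0 False in auto)
        then show ?thesis using False I1 k0 by (simp add: slope_alt Let_def)
      qed
    qed
  qed
qed

lemma grid_h_pos: "lmin < lmax \<Longrightarrow> I \<ge> 1 \<Longrightarrow> grid_h lmin lmax I > 0"
  unfolding grid_h_def by simp

lemma pchip_cell:
  assumes lm: "lmin < lmax" and I: "I \<ge> 1"
  obtains k s where "k \<le> I - 1" "0 \<le> s" "s \<le> 1"
    "\<And>y. pchip_real lmin lmax I y x = y k * (2 * s^3 - 3 * s^2 + 1)
        + grid_h lmin lmax I * pchip_slope lmin lmax I y k * (s^3 - 2 * s^2 + s)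
        + y (Suc k) * (- 2 * s^3 + 3 * s^2)
        + grid_h lmin lmax I * pchip_slope lmin lmax I y (Suc k) * (s^3 - s^2)"
proof -
  define h where "h = grid_h lmin lmax I"
  define x' where "x' = max lmin (min lmax x)"
  define k where "k = min (nat \<lfloor>(x' - lmin) / h\<rfloor>) (I - 1)"
  define s where "s = (x' - grid_pt lmin lmax I k) / h"
  have h: "h > 0" unfolding h_def using grid_h_pos[OF lm I] .
  have hI: "h * real I = lmax - lmin" unfolding h_def grid_h_def using I by simp
  define q where "q = (x' - lmin) / h"
  have q0: "q \<ge> 0" unfolding q_def x'_def using h by simp
  have qI: "q \<le> real I"
  proof -
    have "x' - lmin \<le> h * real I" unfolding x'_def using hI lm by simp
    then show ?thesis unfolding q_def using h by (simp add: divide_le_eq mult.commute)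
  qed
  have s_eq: "s = q - real k"
    unfolding s_def q_def grid_pt_def h_def[symmetric] using h by (simp add: field_simps)
  have kI: "k \<le> I - 1" unfolding k_def by simp
  have sb: "0 \<le> s \<and> s \<le> 1"
  proof (cases "nat \<lfloor>q\<rfloor> \<le> I - 1")
    case True
    then have "k = nat \<lfloor>q\<rfloor>" unfolding k_def q_def by simp
    then have "real k = of_int \<lfloor>q\<rfloor>" using q0 by simp
    moreover have "of_int \<lfloor>q\<rfloor> \<le> q" "q < of_int \<lfloor>q\<rfloor> + 1"
      by (rule of_int_floor_le) (rule real_of_int_floor_add_one_gt)
    ultimately show ?thesis using s_eq by linarith
  next
    case False
    then have k: "k = I - 1" unfolding k_def q_def by simp
    from False have "\<lfloor>q\<rfloor> \<ge> int I" using I by linarith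
    then have "q \<ge> real I" by (metis le_floor_iff of_int_of_nat_eq)
    then have "q = real I" using qI by simp
    then show ?thesis using s_eq k I by (simp add: of_nat_diff)
  qed
  have eq: "pchip_real lmin lmax I y x = y k * (2 * s^3 - 3 * s^2 + 1)
        + grid_h lmin lmax I * pchip_slope lmin lmax I y k * (s^3 - 2 * s^2 + s)
        + y (Suc k) * (- 2 * s^3 + 3 * s^2)
        + grid_h lmin lmax I * pchip_slope lmin lmax I y (Suc k) * (s^3 - s^2)" for y
    unfolding pchip_real_def Let_def h_def x'_def k_def s_def by (rule refl)
  show ?thesis using that kI sb eq by blast
qed

lemma pchip_real_lip:
  assumes lm: "lmin < lmax" and I: "I \<ge> 1" and B: "\<forall>i\<le>I. \<bar>y i - z i\<bar> \<le> B"
  shows "\<bar>pchip_real lmin lmax I y x - pchip_real lmin lmax I z x\<bar> \<le> 17 * B"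
proof -
  let ?h = "grid_h lmin lmax I"
  have h: "?h > 0" using grid_h_pos[OF lm I] .
  obtain k s where k: "k \<le> I - 1" and s: "0 \<le> s" "s \<le> 1" and eq: "\<And>y. pchip_real lmin lmax I y x = y k * (2 * s^3 - 3 * s^2 + 1)
        + ?h * pchip_slope lmin lmax I y k * (s^3 - 2 * s^2 + s)
        + y (Suc k) * (- 2 * s^3 + 3 * s^2)
        + ?h * pchip_slope lmin lmax I y (Suc k) * (s^3 - s^2)"
    using pchip_cell[OF lm I] by metis
  define a0 where "a0 = 2 * s^3 - 3 * s^2 + 1"
  define a1 where "a1 = s^3 - 2 * s^2 + s"
  define a2 where "a2 = - 2 * s^3 + 3 * s^2"
  define a3 where "a3 = s^3 - s^2"
  have a02: "a0 + a2 = 1" unfolding a0_def a2_def by simp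
  have a0: "a0 \<ge> 0"
  proof -
    have "a0 = (1 - s)^2 * (1 + 2 * s)" unfolding a0_def by (simp add: algebra_simps power2_eq_square power3_eq_cube)
    then show ?thesis using s by simp
  qed
  have a2: "a2 \<ge> 0"
  proof -
    have "a2 = s^2 * (3 - 2 * s)" unfolding a2_def by (simp add: algebra_simps power2_eq_square power3_eq_cube)
    then show ?thesis using s by simp
  qed
  have a1: "\<bar>a1\<bar> \<le> 1"
  proof -
    have "a1 = s * (1 - s)^2" unfolding a1_def by (simp add: algebra_simps power2_eq_square power3_eq_cube)
    moreover have "(1 - s)^2 \<le> 1" using s by (simp add: power_le_one abs_le_iff)
    moreover have "s * (1-s)^2 \<le> 1 * 1" using s calculation(2) by (intro mult_mono) auto
    ultimately show ?thesis using s by simp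
  qed
  have a3: "\<bar>a3\<bar> \<le> 1"
  proof -
    have "a3 = - (s^2 * (1 - s))" unfolding a3_def by (simp add: algebra_simps power2_eq_square power3_eq_cube)
    moreover have "s^2 \<le> 1" using s by (simp add: power_le_one)
    moreover have "s^2 * (1-s) \<le> 1 * 1" using s calculation(2) by (intro mult_mono) auto
    ultimately show ?thesis using s by simp
  qed
  have kk: "k \<le> I" "Suc k \<le> I" using k I by auto
  have d0: "\<bar>?h * pchip_slope lmin lmax I y k - ?h * pchip_slope lmin lmax I z k\<bar> \<le> 8 * B"
  proof -
    have "\<bar>?h * pchip_slope lmin lmax I y k - ?h * pchip_slope lmin lmax I z k\<bar>
        = ?h * \<bar>pchip_slope lmin lmax I y k - pchip_slope lmin lmax I z k\<bar>"
      using h by (simp add: abs_mult right_diff_distrib[symmetric])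
    also have "\<dots> \<le> ?h * (8 * B / ?h)" by (rule mult_left_mono[OF slope_lip[OF h I kk(1) B]]) (use h in simp)
    finally show ?thesis using h by simp
  qed
  have d1: "\<bar>?h * pchip_slope lmin lmax I y (Suc k) - ?h * pchip_slope lmin lmax I z (Suc k)\<bar> \<le> 8 * B"
  proof -
    have "\<bar>?h * pchip_slope lmin lmax I y (Suc k) - ?h * pchip_slope lmin lmax I z (Suc k)\<bar>
        = ?h * \<bar>pchip_slope lmin lmax I y (Suc k) - pchip_slope lmin lmax I z (Suc k)\<bar>"
      using h by (simp add: abs_mult right_diff_distrib[symmetric])
    also have "\<dots> \<le> ?h * (8 * B / ?h)" by (rule mult_left_mono[OF slope_lip[OF h I kk(2) B]]) (use h in simp)
    finally show ?thesis using h by simp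
  qed
  have y0: "\<bar>y k - z k\<bar> \<le> B" "\<bar>y (Suc k) - z (Suc k)\<bar> \<le> B" using B kk by auto
  have B0: "B \<ge> 0" using y0 by linarith
  have gen: "\<bar>u0 * a0 + v0 * a1 + u1 * a2 + v1 * a3\<bar> \<le> 17 * B"
    if "\<bar>u0\<bar> \<le> B" "\<bar>u1\<bar> \<le> B" "\<bar>v0\<bar> \<le> 8 * B" "\<bar>v1\<bar> \<le> 8 * B" for u0 u1 v0 v1 :: real
  proof -
    have "\<bar>u0 * a0\<bar> \<le> B * a0" using that a0 by (simp add: abs_mult mult_right_mono)
    moreover have "\<bar>u1 * a2\<bar> \<le> B * a2" using that a2 by (simp add: abs_mult mult_right_mono)
    moreover have "\<bar>v0 * a1\<bar> \<le> 8 * B * 1" unfolding abs_mult by (rule mult_mono) (use that a1 in auto)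
    moreover have "\<bar>v1 * a3\<bar> \<le> 8 * B * 1" unfolding abs_mult by (rule mult_mono) (use that a3 in auto)
    moreover have "B * a0 + B * a2 = B" using a02 by (simp add: distrib_left[symmetric])
    ultimately show ?thesis by linarith
  qed
  have "pchip_real lmin lmax I y x - pchip_real lmin lmax I z x
    = (y k - z k) * a0 + (?h * pchip_slope lmin lmax I y k - ?h * pchip_slope lmin lmax I z k) * a1
      + (y (Suc k) - z (Suc k)) * a2 + (?h * pchip_slope lmin lmax I y (Suc k) - ?h * pchip_slope lmin lmax I z (Suc k)) * a3"
    unfolding eq a0_def a1_def a2_def a3_def by (simp add: algebra_simps)
  then show ?thesis using gen[OF y0(1) y0(2) d0 d1] by simp
qed



lemma pchip_real_meas[measurable]: "(\<lambda>x. pchip_real lmin lmax I y x) \<in> borel_measurable borel"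
proof -
  define kf where "kf x = min (nat \<lfloor>(max lmin (min lmax x) - lmin) / grid_h lmin lmax I\<rfloor>) (I - 1)" for x
  define f where "f k x = (let h = grid_h lmin lmax I; x' = max lmin (min lmax x);
          s = (x' - grid_pt lmin lmax I k) / h;
          d = pchip_slope lmin lmax I y
      in y k * (2 * s^3 - 3 * s^2 + 1) + h * d k * (s^3 - 2 * s^2 + s)
         + y (Suc k) * (- 2 * s^3 + 3 * s^2) + h * d (Suc k) * (s^3 - s^2))" for k x
  have eq: "pchip_real lmin lmax I y x = f (kf x) x" for x
    unfolding pchip_real_def f_def kf_def Let_def by (rule refl)
  have "(\<lambda>x. f (kf x) x) \<in> borel_measurable borel"
  proof -
    have m1: "(\<lambda>x. f i x) \<in> borel_measurable borel" if "i \<in> UNIV" for i unfolding f_def Let_def by measurable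
    have g: "(\<lambda>x. (max lmin (min lmax x) - lmin) / grid_h lmin lmax I) \<in> borel_measurable borel"
      by (intro borel_measurable_divide borel_measurable_diff borel_measurable_max borel_measurable_min borel_measurable_const measurable_ident_sets refl)
    have fl: "(\<lambda>x. \<lfloor>(max lmin (min lmax x) - lmin) / grid_h lmin lmax I\<rfloor>) \<in> measurable borel (count_space UNIV)"
      by (rule measurable_compose[OF g measurable_real_floor])
    define \<phi> :: "int \<Rightarrow> nat" where "\<phi> z = min (nat z) (I - 1)" for z
    define fl' where "fl' x = \<lfloor>(max lmin (min lmax x) - lmin) / grid_h lmin lmax I\<rfloor>" for x
    have fl': "fl' \<in> measurable borel (count_space UNIV)" unfolding fl'_def by (rule fl)
    have ph: "\<phi> \<in> measurable (count_space UNIV) (count_space UNIV)" by (rule measurable_count_space)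
    have kfe: "kf = (\<lambda>x. \<phi> (fl' x))" unfolding kf_def \<phi>_def fl'_def by (rule refl)
    have m2: "kf \<in> measurable borel (count_space UNIV)" unfolding kfe
      by (rule measurable_compose[OF fl' ph])
    show ?thesis by (rule measurable_compose_countable'[OF m1 m2]) simp_all
  qed
  then show ?thesis using eq by simp
qed

lemma pchip_eq: "pchip lmin lmax I V x = complex_of_real (pchip_real lmin lmax I (\<lambda>i. Re (V i)) x)
   + \<i> * complex_of_real (pchip_real lmin lmax I (\<lambda>i. Im (V i)) x)"
  unfolding pchip_def by (simp add: complex_eq_iff)

lemma pchip_meas[measurable]: "(\<lambda>x. pchip lmin lmax I V x) \<in> borel_measurable borel"
  unfolding pchip_eq by measurable

lemma pchip_lip:
  assumes lm: "lmin < lmax" and I: "I \<ge> 1" and B: "\<forall>i\<le>I. cmod (V i - W i) \<le> B"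
  shows "cmod (pchip lmin lmax I V x - pchip lmin lmax I W x) \<le> 34 * B"
proof -
  have r: "\<bar>pchip_real lmin lmax I (\<lambda>i. Re (V i)) x - pchip_real lmin lmax I (\<lambda>i. Re (W i)) x\<bar> \<le> 17 * B"
  proof (rule pchip_real_lip[OF lm I], intro allI impI)
    fix i assume "i \<le> I"
    then have "cmod (V i - W i) \<le> B" using B by auto
    moreover have "\<bar>Re (V i - W i)\<bar> \<le> cmod (V i - W i)" by (rule abs_Re_le_cmod)
    ultimately show "\<bar>Re (V i) - Re (W i)\<bar> \<le> B" by simp
  qed
  have m: "\<bar>pchip_real lmin lmax I (\<lambda>i. Im (V i)) x - pchip_real lmin lmax I (\<lambda>i. Im (W i)) x\<bar> \<le> 17 * B"
  proof (rule pchip_real_lip[OF lm I], intro allI impI)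
    fix i assume "i \<le> I"
    then have "cmod (V i - W i) \<le> B" using B by auto
    moreover have "\<bar>Im (V i - W i)\<bar> \<le> cmod (V i - W i)" by (rule abs_Im_le_cmod)
    ultimately show "\<bar>Im (V i) - Im (W i)\<bar> \<le> B" by simp
  qed
  let ?z = "pchip lmin lmax I V x - pchip lmin lmax I W x"
  have "cmod ?z \<le> \<bar>Re ?z\<bar> + \<bar>Im ?z\<bar>" by (rule cmod_le)
  moreover have "Re ?z = pchip_real lmin lmax I (\<lambda>i. Re (V i)) x - pchip_real lmin lmax I (\<lambda>i. Re (W i)) x"
    "Im ?z = pchip_real lmin lmax I (\<lambda>i. Im (V i)) x - pchip_real lmin lmax I (\<lambda>i. Im (W i)) x"
    unfolding pchip_def by simp_all
  ultimately show ?thesis using r m by linarith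
qed

lemma pchip_zero: "pchip lmin lmax I (\<lambda>i. 0) x = 0"
proof -
  have s: "pchip_slope lmin lmax I (\<lambda>i. 0) k = 0" for k
    unfolding slope_alt pchip_secant_def end_median hmean_def Let_def by simp
  have "pchip_real lmin lmax I (\<lambda>i. 0) x = 0"
    unfolding pchip_real_def Let_def s by simp
  then show ?thesis unfolding pchip_def by (simp add: complex_eq_iff)
qed



lemma grid_in:
  assumes lm: "lmin < lmax" and I: "I \<ge> 1" and i: "i \<le> I"
  shows "grid_pt lmin lmax I i \<in> {lmin..lmax}"
proof -
  have h: "grid_h lmin lmax I > 0" using grid_h_pos[OF lm I] .
  have hI: "real I * grid_h lmin lmax I = lmax - lmin" unfolding grid_h_def using I by simp
  have "real i * grid_h lmin lmax I \<le> real I * grid_h lmin lmax I"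
    using i h by (intro mult_right_mono) auto
  then show ?thesis unfolding grid_pt_def using hI h by auto
qed

lemma ng_ge: "i \<le> I \<Longrightarrow> cmod (V i) \<le> norm_grid I V"
  unfolding norm_grid_def by (rule Max_ge) auto

lemma ng_le: "(\<And>i. i \<le> I \<Longrightarrow> cmod (V i) \<le> B) \<Longrightarrow> norm_grid I V \<le> B"
  unfolding norm_grid_def by (subst Max_le_iff) auto

lemma ng_obtain: "\<exists>i\<le>I. norm_grid I V = cmod (V i)"
proof -
  have "Max ((\<lambda>i. cmod (V i)) ` {0..I}) \<in> (\<lambda>i. cmod (V i)) ` {0..I}"
    by (rule Max_in) auto
  then obtain i where "i \<in> {0..I}" "Max ((\<lambda>i. cmod (V i)) ` {0..I}) = cmod (V i)" by blast
  then show ?thesis unfolding norm_grid_def by auto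
qed

lemma ng_nonneg: "norm_grid I V \<ge> 0"
  using ng_ge[of 0 I V] by (meson norm_ge_zero order_trans zero_le)

lemma kern_sets:
  assumes "prob_kernel_on {lmin..lmax} nu" "l \<in> {lmin..lmax}"
  shows "sets (nu l) = sets borel" "prob_space (nu l)"
  using assms unfolding prob_kernel_on_def by auto

lemma exp_int:
  assumes kern: "prob_kernel_on {lmin..lmax} nu" and mom: "exp_moments {lmin..lmax} nu s0"
    and d: "0 \<le> \<delta>" "\<delta> < s0" and l: "l \<in> {lmin..lmax}"
  shows "integrable (nu l) (\<lambda>x. exp (\<delta> * x))"
proof -
  have sets: "sets (nu l) = sets borel" using kern_sets[OF kern l] by simp
  have "(SUP l\<in>{lmin..lmax}. \<integral>\<^sup>+ x. ennreal (exp (\<delta> * x)) \<partial>nu l) < \<infinity>"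
    using mom d unfolding exp_moments_def by auto
  moreover have "(\<integral>\<^sup>+ x. ennreal (exp (\<delta> * x)) \<partial>nu l) \<le> (SUP l\<in>{lmin..lmax}. \<integral>\<^sup>+ x. ennreal (exp (\<delta> * x)) \<partial>nu l)"
    using l by (rule SUP_upper)
  ultimately have fin: "(\<integral>\<^sup>+ x. ennreal (exp (\<delta> * x)) \<partial>nu l) < \<infinity>" by (rule le_less_trans[rotated])
  have meas: "(\<lambda>x. exp (\<delta> * x)) \<in> borel_measurable (nu l)"
    unfolding measurable_cong_sets[OF sets refl] by measurable
  show ?thesis by (rule integrableI_bounded) (use meas fin in auto)
qed

lemma pchip_bound:
  assumes lm: "lmin < lmax" and I: "I \<ge> 1"
  shows "cmod (pchip lmin lmax I V z) \<le> 34 * norm_grid I V"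
proof -
  have "cmod (pchip lmin lmax I V z - pchip lmin lmax I (\<lambda>i. 0) z) \<le> 34 * norm_grid I V"
    by (rule pchip_lip[OF lm I]) (auto intro: ng_ge)
  then show ?thesis by (simp add: pchip_zero)
qed

lemma integrand_int:
  assumes lm: "lmin < lmax" and I: "I \<ge> 1" and kern: "prob_kernel_on {lmin..lmax} nu"
    and mom: "exp_moments {lmin..lmax} nu s0"
    and d: "0 < \<delta>" "\<delta> < s0" and l: "l \<in> {lmin..lmax}"
  shows "integrable (nu l) (\<lambda>x. exp (Complex \<delta> y * complex_of_real x) * pchip lmin lmax I V (l + beta * x))"
proof -
  have sets: "sets (nu l) = sets borel" using kern_sets[OF kern l] by simp
  have ie: "integrable (nu l) (\<lambda>x. exp (\<delta> * x))" using exp_int[OF kern mom _ d(2) l] d by simp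
  let ?B = "norm_grid I V"
  have ie2: "integrable (nu l) (\<lambda>x. exp (\<delta> * x) * (34 * ?B))" using ie by simp
  show ?thesis
  proof (rule Bochner_Integration.integrable_bound[OF ie2])
    show "(\<lambda>x. exp (Complex \<delta> y * complex_of_real x) * pchip lmin lmax I V (l + beta * x)) \<in> borel_measurable (nu l)"
      unfolding measurable_cong_sets[OF sets refl] by measurable
    show "AE x in nu l. norm (exp (Complex \<delta> y * complex_of_real x) * pchip lmin lmax I V (l + beta * x))
        \<le> norm (exp (\<delta> * x) * (34 * ?B))"
    proof (rule AE_I2)
      fix x
      have "norm (exp (Complex \<delta> y * complex_of_real x) * pchip lmin lmax I V (l + beta * x))
          = exp (\<delta> * x) * cmod (pchip lmin lmax I V (l + beta * x))"
        by (simp add: norm_mult)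
      also have "\<dots> \<le> exp (\<delta> * x) * (34 * ?B)"
        by (rule mult_left_mono[OF pchip_bound[OF lm I]]) simp
      also have "\<dots> = norm (exp (\<delta> * x) * (34 * ?B))" using ng_nonneg[of I V] by simp
      finally show "norm (exp (Complex \<delta> y * complex_of_real x) * pchip lmin lmax I V (l + beta * x))
        \<le> norm (exp (\<delta> * x) * (34 * ?B))" .
    qed
  qed
qed



lemma Lexp_ge:
  assumes "i \<le> I"
  shows "grid_pt lmin lmax I i * ((LINT x|nu (grid_pt lmin lmax I i). exp (d * x)) + 1) \<le> Lexp lmin lmax I nu d"
  unfolding Lexp_def by (rule Max_ge) (use assms in auto)

lemma Nexp_diff:
  assumes lm: "lmin < lmax" and I: "I \<ge> 1" and l0: "0 \<le> lmin" and kern: "prob_kernel_on {lmin..lmax} nu"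
    and mom: "exp_moments {lmin..lmax} nu s0" and d: "0 < \<delta>" "\<delta> < s0" and i: "i \<le> I"
    and B: "\<forall>j\<le>I. cmod (V j - W j) \<le> B"
  shows "cmod (Nexp lmin lmax I beta nu (Complex \<delta> y) V i - Nexp lmin lmax I beta nu (Complex \<delta> y) W i)
     \<le> 34 * B * Lexp lmin lmax I nu \<delta>"
proof -
  define l where "l = grid_pt lmin lmax I i"
  have lL: "l \<in> {lmin..lmax}" unfolding l_def by (rule grid_in[OF lm I i])
  have lpos: "l \<ge> 0" using lL l0 by auto
  define gV where "gV x = exp (Complex \<delta> y * complex_of_real x) * pchip lmin lmax I V (l + beta * x)" for x
  define gW where "gW x = exp (Complex \<delta> y * complex_of_real x) * pchip lmin lmax I W (l + beta * x)" for x
  have iV: "integrable (nu l) gV" unfolding gV_def by (rule integrand_int[OF lm I kern mom d lL])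
  have iW: "integrable (nu l) gW" unfolding gW_def by (rule integrand_int[OF lm I kern mom d lL])
  define E where "E = (LINT x|nu l. exp (\<delta> * x))"
  have ie: "integrable (nu l) (\<lambda>x. exp (\<delta> * x))" using exp_int[OF kern mom _ d(2) lL] d by simp
  have E0: "E \<ge> 0" unfolding E_def by (rule integral_nonneg_AE) auto
  have B0: "B \<ge> 0" using B by (metis norm_ge_zero order_trans le_refl zero_le)
  have diff: "Nexp lmin lmax I beta nu (Complex \<delta> y) V i - Nexp lmin lmax I beta nu (Complex \<delta> y) W i
      = complex_of_real l * ((LINT x|nu l. gV x - gW x) - (V i - W i))"
    unfolding Nexp_def Let_def l_def[symmetric] gV_def[symmetric] gW_def[symmetric]
    by (subst Bochner_Integration.integral_diff[OF iV iW]) (simp add: algebra_simps)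
  have ib: "cmod (LINT x|nu l. gV x - gW x) \<le> (LINT x|nu l. exp (\<delta> * x) * (34 * B))"
  proof (rule Bochner_Integration.integral_norm_bound_integral)
    show "integrable (nu l) (\<lambda>x. gV x - gW x)" using iV iW by simp
    show "integrable (nu l) (\<lambda>x. exp (\<delta> * x) * (34 * B))" using ie by simp
    fix x
    have "cmod (gV x - gW x) = exp (\<delta> * x) * cmod (pchip lmin lmax I V (l + beta * x) - pchip lmin lmax I W (l + beta * x))"
      unfolding gV_def gW_def by (simp add: norm_mult right_diff_distrib[symmetric])
    also have "\<dots> \<le> exp (\<delta> * x) * (34 * B)"
      by (rule mult_left_mono[OF pchip_lip[OF lm I B]]) simp
    finally show "cmod (gV x - gW x) \<le> exp (\<delta> * x) * (34 * B)" .
  qed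
  have ib2: "(LINT x|nu l. exp (\<delta> * x) * (34 * B)) = E * (34 * B)" unfolding E_def by simp
  have vb: "cmod (V i - W i) \<le> B" using B i by auto
  have "cmod ((LINT x|nu l. gV x - gW x) - (V i - W i)) \<le> E * (34 * B) + B"
    using norm_triangle_ineq4[of "(LINT x|nu l. gV x - gW x)" "V i - W i"] ib ib2 vb by linarith
  also have "\<dots> \<le> 34 * B * (E + 1)" using B0 E0 by (simp add: algebra_simps)
  finally have c: "cmod ((LINT x|nu l. gV x - gW x) - (V i - W i)) \<le> 34 * B * (E + 1)" .
  have "cmod (Nexp lmin lmax I beta nu (Complex \<delta> y) V i - Nexp lmin lmax I beta nu (Complex \<delta> y) W i)
      = l * cmod ((LINT x|nu l. gV x - gW x) - (V i - W i))"
    unfolding diff norm_mult using lpos by simp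
  also have "\<dots> \<le> l * (34 * B * (E + 1))" by (rule mult_left_mono[OF c lpos])
  also have "\<dots> = 34 * B * (l * (E + 1))" by simp
  also have "\<dots> \<le> 34 * B * Lexp lmin lmax I nu \<delta>"
    using Lexp_ge[OF i, of lmin lmax nu \<delta>] B0 unfolding E_def l_def by (intro mult_left_mono) auto
  finally show ?thesis .
qed

lemma sum_delta_le:
  assumes "finite S" "(v::real) \<ge> 0"
  shows "(\<Sum>j\<in>S. if j = c then v else 0) \<le> v"
  using assms by (simp add: sum.delta)

lemma A_stab:
  assumes lm: "lmin < lmax" and I: "I \<ge> 1" and dt: "dt > 0" and r: "r \<ge> 0"
  shows "norm_grid I E \<le> norm_grid I (Amul lmin lmax I dt mu r E)"
proof -
  obtain i0 where i0: "i0 \<le> I" and M: "norm_grid I E = cmod (E i0)" using ng_obtain by blast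
  define M where "M = norm_grid I E"
  let ?a = "Amat lmin lmax I dt mu r i0"
  define h where "h = grid_h lmin lmax I"
  have h: "h > 0" unfolding h_def using grid_h_pos[OF lm I] .
  define mp where "mp = max (mu (grid_pt lmin lmax I i0)) 0"
  define mm where "mm = min (mu (grid_pt lmin lmax I i0)) 0"
  have mp: "mp \<ge> 0" and mm: "mm \<le> 0" unfolding mp_def mm_def by auto
  define S where "S = dt * (mp - mm) / h"
  have S0: "S \<ge> 0" unfolding S_def using dt h mp mm by simp
  have aii: "?a i0 = 1 + dt * r + S"
    unfolding Amat_def Let_def S_def h_def[symmetric] mp_def[symmetric] mm_def[symmetric] by (simp add: field_simps)
  have p1: "- dt * mm / h \<ge> 0"
  proof -
    have "dt * mm \<le> 0" by (rule mult_nonneg_nonpos) (use dt mm in auto)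
    then have "dt * mm / h \<le> 0" using h divide_nonpos_pos by auto
    then show ?thesis by simp
  qed
  have p2: "dt * mp / h \<ge> 0" using dt h mp by simp
  have aj: "\<bar>?a j\<bar> \<le> (if j = i0 - 1 then - dt * mm / h else 0) + (if j = i0 + 1 then dt * mp / h else 0)"
    if "j \<noteq> i0" for j
  proof -
    have e: "?a j = (if 1 \<le> i0 \<and> j = i0 - 1 then dt * mm / h else if i0 + 1 \<le> I \<and> j = i0 + 1 then - dt * mp / h else 0)"
      unfolding Amat_def Let_def h_def[symmetric] mp_def[symmetric] mm_def[symmetric] using that by simp
    show ?thesis unfolding e using p1 p2 that by (auto simp: abs_if)
  qed
  have Mnn: "\<forall>j\<le>I. cmod (E j) \<le> M" unfolding M_def using ng_ge by blast
  have M0: "M \<ge> 0" unfolding M_def by (rule ng_nonneg)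
  have fin: "finite ({0..I} - {i0})" by simp
  have rest: "cmod (\<Sum>j\<in>{0..I} - {i0}. complex_of_real (?a j) * E j) \<le> S * M"
  proof -
    have "cmod (\<Sum>j\<in>{0..I} - {i0}. complex_of_real (?a j) * E j) \<le> (\<Sum>j\<in>{0..I} - {i0}. \<bar>?a j\<bar> * M)"
    proof (rule order_trans[OF norm_sum sum_mono])
      fix j assume "j \<in> {0..I} - {i0}"
      then have "cmod (E j) \<le> M" using Mnn by auto
      then show "cmod (complex_of_real (?a j) * E j) \<le> \<bar>?a j\<bar> * M"
        by (simp add: norm_mult mult_left_mono)
    qed
    also have "\<dots> = (\<Sum>j\<in>{0..I} - {i0}. \<bar>?a j\<bar>) * M" by (simp add: sum_distrib_right)
    also have "\<dots> \<le> S * M"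
    proof (rule mult_right_mono[OF _ M0])
      have "(\<Sum>j\<in>{0..I} - {i0}. \<bar>?a j\<bar>) \<le> (\<Sum>j\<in>{0..I} - {i0}. (if j = i0 - 1 then - dt * mm / h else 0) + (if j = i0 + 1 then dt * mp / h else 0))"
        by (rule sum_mono) (use aj in auto)
      also have "\<dots> = (\<Sum>j\<in>{0..I} - {i0}. if j = i0 - 1 then - dt * mm / h else 0) + (\<Sum>j\<in>{0..I} - {i0}. if j = i0 + 1 then dt * mp / h else 0)"
        by (rule sum.distrib)
      also have "\<dots> \<le> - dt * mm / h + dt * mp / h"
        using sum_delta_le[OF fin, of "- dt * mm / h" "i0 - 1"] sum_delta_le[OF fin, of "dt * mp / h" "i0 + 1"]
          p1 p2 by linarith
      also have "\<dots> = S" unfolding S_def using h by (simp add: field_simps)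
      finally show "(\<Sum>j\<in>{0..I} - {i0}. \<bar>?a j\<bar>) \<le> S" .
    qed
    finally show ?thesis .
  qed
  have split: "Amul lmin lmax I dt mu r E i0 = complex_of_real (?a i0) * E i0 + (\<Sum>j\<in>{0..I} - {i0}. complex_of_real (?a j) * E j)"
    unfolding Amul_def using i0 by (subst sum.remove[of _ i0]) auto
  have "cmod (complex_of_real (?a i0) * E i0) = \<bar>?a i0\<bar> * cmod (E i0)"
    unfolding norm_mult norm_of_real by (rule refl)
  also have "\<dots> = (1 + dt * r + S) * M"
  proof -
    have "1 + dt * r + S > 0" using dt r S0 by (simp add: add_pos_nonneg)
    then show ?thesis unfolding aii using M M_def by simp
  qed
  finally have "cmod (complex_of_real (?a i0) * E i0) = (1 + dt * r + S) * M" .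
  then have "cmod (Amul lmin lmax I dt mu r E i0) \<ge> (1 + dt * r + S) * M - S * M"
    using split rest norm_triangle_ineq2[of "complex_of_real (?a i0) * E i0" "- (\<Sum>j\<in>{0..I} - {i0}. complex_of_real (?a j) * E j)"]
    by (simp add: norm_minus_cancel)
  moreover have "(1 + dt * r + S) * M - S * M \<ge> M" using dt r M0 by (simp add: algebra_simps)
  moreover have "cmod (Amul lmin lmax I dt mu r E i0) \<le> norm_grid I (Amul lmin lmax I dt mu r E)"
    by (rule ng_ge[OF i0])
  ultimately show ?thesis unfolding M_def by linarith
qed



lemma main_bound:
  assumes T: "T > 0" and r: "r \<ge> 0" and lm: "lmin < lmax" and l0: "0 \<le> lmin" and I: "I \<ge> 1" and N: "N \<ge> 1"
    and kern: "prob_kernel_on {lmin..lmax} nu" and mom: "exp_moments {lmin..lmax} nu s0"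
    and d: "0 < \<delta>" "\<delta> < s0"
    and trm: "\<forall>l\<in>{lmin..lmax}. F T l = 1"
    and sch: "imex_scheme T N r beta lmin lmax I mu nu (Complex \<delta> y) Fn"
    and res: "\<forall>n<N. norm_grid I (residual T N r beta lmin lmax I mu nu (Complex \<delta> y) F n) \<le> taubar"
    and n: "n \<le> N"
  shows "norm_grid I (\<lambda>i. Fn n i - F (time_pt T N n) (grid_pt lmin lmax I i))
           \<le> T * exp (34 * Lexp lmin lmax I nu \<delta> * T) * taubar"
proof -
  define dt where "dt = T / real N"
  have dt: "dt > 0" unfolding dt_def using T N by simp
  have dtN: "dt * real N = T" unfolding dt_def using N by simp
  define L where "L = Lexp lmin lmax I nu \<delta>"
  have L0: "L \<ge> 0"
  proof -
    have "grid_pt lmin lmax I 0 * ((LINT x|nu (grid_pt lmin lmax I 0). exp (\<delta> * x)) + 1) \<le> L"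
      unfolding L_def by (rule Lexp_ge) simp
    moreover have "grid_pt lmin lmax I 0 \<ge> 0" unfolding grid_pt_def using l0 by simp
    moreover have "(LINT x|nu (grid_pt lmin lmax I 0). exp (\<delta> * x)) \<ge> 0" by (rule integral_nonneg_AE) auto
    ultimately show ?thesis by (meson add_nonneg_nonneg mult_nonneg_nonneg order_trans zero_le_one)
  qed
  define G where "G m j = F (time_pt T N m) (grid_pt lmin lmax I j)" for m j
  define e where "e m j = Fn m j - G m j" for m j
  define q where "q = 1 + dt * (34 * L)"
  have q1: "q \<ge> 1" unfolding q_def using dt L0 by simp
  have tau0: "taubar \<ge> 0" using res N ng_nonneg by (meson less_le_trans order_trans zero_less_one)
  have step: "norm_grid I (e m) \<le> q * norm_grid I (e (Suc m)) + dt * taubar" if mN: "m < N" for m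
  proof -
    let ?B = "norm_grid I (e (Suc m))"
    let ?res = "residual T N r beta lmin lmax I mu nu (Complex \<delta> y) F m"
    have "norm_grid I (Amul lmin lmax I dt mu r (e m)) \<le> q * ?B + dt * taubar"
    proof (rule ng_le)
      fix i assume i: "i \<le> I"
      have lin: "Amul lmin lmax I dt mu r (e m) i = Amul lmin lmax I dt mu r (Fn m) i - Amul lmin lmax I dt mu r (G m) i"
        unfolding Amul_def e_def by (simp add: sum_subtractf right_diff_distrib)
      have s1: "Amul lmin lmax I dt mu r (Fn m) i = Fn (Suc m) i + complex_of_real dt * Nexp lmin lmax I beta nu (Complex \<delta> y) (Fn (Suc m)) i"
        using sch mN i unfolding imex_scheme_def dt_def by auto
      have rdef: "?res i = (G (Suc m) i - G m i) / complex_of_real dt - (Amul lmin lmax I dt mu r (G m) i - G m i) / complex_of_real dt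
          + Nexp lmin lmax I beta nu (Complex \<delta> y) (G (Suc m)) i"
        unfolding residual_def Let_def G_def dt_def by simp
      have dtc: "complex_of_real dt \<noteq> 0" using dt by simp
      have s2: "Amul lmin lmax I dt mu r (G m) i = G (Suc m) i + complex_of_real dt * Nexp lmin lmax I beta nu (Complex \<delta> y) (G (Suc m)) i
          - complex_of_real dt * ?res i"
        unfolding rdef using dtc by (simp add: field_simps)
      have eq: "Amul lmin lmax I dt mu r (e m) i = e (Suc m) i
          + complex_of_real dt * (Nexp lmin lmax I beta nu (Complex \<delta> y) (Fn (Suc m)) i - Nexp lmin lmax I beta nu (Complex \<delta> y) (G (Suc m)) i)
          + complex_of_real dt * ?res i"
        unfolding lin s1 s2 e_def by (simp add: algebra_simps)
      have nb: "cmod (Nexp lmin lmax I beta nu (Complex \<delta> y) (Fn (Suc m)) i - Nexp lmin lmax I beta nu (Complex \<delta> y) (G (Suc m)) i)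
          \<le> 34 * ?B * L"
        unfolding L_def by (rule Nexp_diff[OF lm I l0 kern mom d i]) (use ng_ge[of _ I "e (Suc m)"] in \<open>auto simp: e_def\<close>)
      have rb: "cmod (?res i) \<le> taubar" using ng_ge[OF i, of ?res] res mN by (meson order_trans)
      have eb: "cmod (e (Suc m) i) \<le> ?B" by (rule ng_ge[OF i])
      let ?X = "Nexp lmin lmax I beta nu (Complex \<delta> y) (Fn (Suc m)) i - Nexp lmin lmax I beta nu (Complex \<delta> y) (G (Suc m)) i"
      have "cmod (Amul lmin lmax I dt mu r (e m) i) \<le> cmod (e (Suc m) i) + cmod (complex_of_real dt * ?X) + cmod (complex_of_real dt * ?res i)"
        unfolding eq by (meson add_mono norm_triangle_ineq order_trans order_refl)
      also have "\<dots> = cmod (e (Suc m) i) + dt * cmod ?X + dt * cmod (?res i)"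
        using dt by (simp add: norm_mult)
      also have "\<dots> \<le> ?B + dt * (34 * ?B * L) + dt * taubar"
      proof -
        have a1: "dt * cmod ?X \<le> dt * (34 * ?B * L)" by (rule mult_left_mono[OF nb]) (use dt in simp)
        have a2: "dt * cmod (?res i) \<le> dt * taubar" by (rule mult_left_mono[OF rb]) (use dt in simp)
        show ?thesis using eb a1 a2 by linarith
      qed
      also have "\<dots> = q * ?B + dt * taubar" unfolding q_def by (simp add: algebra_simps)
      finally show "cmod (Amul lmin lmax I dt mu r (e m) i) \<le> q * ?B + dt * taubar" .
    qed
    then show ?thesis using A_stab[OF lm I dt r, of "e m" mu] by linarith
  qed
  have eN: "norm_grid I (e N) \<le> 0"
  proof (rule ng_le)
    fix i assume i: "i \<le> I"
    have "Fn N i = 1" using sch i unfolding imex_scheme_def by auto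
    moreover have "time_pt T N N = T" unfolding time_pt_def using N by simp
    moreover have "F T (grid_pt lmin lmax I i) = 1" using trm grid_in[OF lm I i] by auto
    ultimately show "cmod (e N i) \<le> 0" unfolding e_def G_def by simp
  qed
  have ind: "m \<le> N \<Longrightarrow> norm_grid I (e (N - m)) \<le> real m * dt * taubar * q ^ m" for m
  proof (induction m)
    case 0
    then show ?case using eN by simp
  next
    case (Suc m)
    then have mN: "m < N" by simp
    have IH: "norm_grid I (e (N - m)) \<le> real m * dt * taubar * q ^ m" using Suc by simp
    have sN: "Suc (N - Suc m) = N - m" using mN by simp
    have "norm_grid I (e (N - Suc m)) \<le> q * norm_grid I (e (N - m)) + dt * taubar"
      using step[of "N - Suc m"] mN sN by simp
    also have "\<dots> \<le> q * (real m * dt * taubar * q ^ m) + dt * taubar"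
      using IH q1 by (simp add: mult_left_mono)
    also have "\<dots> \<le> real (Suc m) * dt * taubar * q ^ Suc m"
    proof -
      have "q ^ Suc m \<ge> 1" using q1 by (rule one_le_power)
      then have "dt * taubar * 1 \<le> dt * taubar * q ^ Suc m" using dt tau0 by (intro mult_left_mono) auto
      then show ?thesis by (simp add: algebra_simps)
    qed
    finally show ?case .
  qed
  define m where "m = N - n"
  have mN: "m \<le> N" unfolding m_def by simp
  have nm: "N - m = n" unfolding m_def using n by simp
  have b1: "norm_grid I (e n) \<le> real m * dt * taubar * q ^ m" using ind[OF mN] nm by simp
  have mdt: "real m * dt \<le> T"
  proof -
    have "real m * dt \<le> real N * dt" using mN dt by (intro mult_right_mono) auto
    then show ?thesis using dtN by (simp add: mult.commute)
  qed
  have qm: "q ^ m \<le> exp (34 * L * T)"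
  proof -
    have "q \<le> exp (dt * (34 * L))" unfolding q_def by (rule exp_ge_add_one_self)
    then have "q ^ m \<le> exp (dt * (34 * L)) ^ m" using q1 by (intro power_mono) auto
    also have "\<dots> = exp (real m * (dt * (34 * L)))" by (simp add: exp_of_nat_mult)
    also have "\<dots> \<le> exp (34 * L * T)"
    proof -
      have "real m * dt * (34 * L) \<le> T * (34 * L)" using mdt L0 by (intro mult_right_mono) auto
      then show ?thesis by (simp add: mult.assoc mult.commute mult.left_commute)
    qed
    finally show ?thesis .
  qed
  have "real m * dt * taubar * q ^ m = (real m * dt) * q ^ m * taubar" by simp
  also have "\<dots> \<le> T * exp (34 * L * T) * taubar"
    using mdt qm tau0 q1 dt T by (intro mult_right_mono mult_mono) auto
  finally have "norm_grid I (e n) \<le> T * exp (34 * L * T) * taubar" using b1 by linarith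
  moreover have "e n = (\<lambda>i. Fn n i - F (time_pt T N n) (grid_pt lmin lmax I i))" unfolding e_def G_def by simp
  ultimately show ?thesis unfolding L_def by simp
qed


lemma cs_term: "classical_solution T r beta lmin lmax mu nu eta F \<Longrightarrow> \<forall>l\<in>{lmin..lmax}. F T l = 1"
  unfolding classical_solution_def by blast

theorem mainTheorem3:
  shows "\<exists>C :: real \<Rightarrow> real \<Rightarrow> real \<Rightarrow> real.
    \<forall>(T::real) (r::real) (beta::real) (mu::real \<Rightarrow> real) (lmin::real) (lmax::real) (I::nat)
      (nu::real \<Rightarrow> real measure) (s0::real) (\<delta>::real) (y::real) (c::real) (N::nat)
      (F::real \<Rightarrow> real \<Rightarrow> complex) (Fn::nat \<Rightarrow> nat \<Rightarrow> complex) (taubar::real).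
      T > 0 \<and> r \<ge> 0 \<and> beta \<ge> 0 \<and> 0 \<le> lmin \<and> lmin < lmax \<and> I \<ge> 1 \<and> N \<ge> 1 \<and>
      s0 > 0 \<and> prob_kernel_on {lmin..lmax} nu \<and> exp_moments {lmin..lmax} nu s0 \<and>
      0 < \<delta> \<and> \<delta> < s0 \<and>
      classical_solution T r beta lmin lmax mu nu (Complex \<delta> y) F \<and>
      imex_scheme T N r beta lmin lmax I mu nu (Complex \<delta> y) Fn \<and>
      c < 1 \<and> (T / real N) * Lexp lmin lmax I nu \<delta> \<le> c \<and>
      (\<forall>n<N. norm_grid I (residual T N r beta lmin lmax I mu nu (Complex \<delta> y) F n) \<le> taubar)
      \<longrightarrow> (\<forall>n\<le>N. norm_grid I (\<lambda>i. Fn n i - F (time_pt T N n) (grid_pt lmin lmax I i))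
                    \<le> C T r (Lexp lmin lmax I nu \<delta>) * taubar)"
  apply (rule exI[of _ "\<lambda>T r L. T * exp (34 * L * T)"])
  apply (intro allI impI)
  apply (elim conjE)
  apply (rule main_bound)
  apply (assumption | (rule cs_term, assumption))+
  done

end
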